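(* Let $X$ be a finite $T_0$-space. If $x_i\in X$ is a weak beat point, then $\det(X_M)=-\det\big((X\setminus\{x_i\})_M\big)$.
   Context: A finite $T_0$-space is identified with a finite poset via $x\le y$ iff $U_x\subseteq U_y$, where $U_x$ is the minimal open set containing $x$; subsets carry the induced order/subspace topology. For a labelling $X=\{x_1,\dots,x_n\}$, $X_M=(x_{i,j})$ is the $n\times n$ matrix with $x_{i,j}=0$ if $x_i\le x_j$ and $x_{i,j}=1$ otherwise; its determinant does not depend on the labelling. Let $\hat U_x=\{y: y<x\}$ and $\hat F_x=\{y:y>x\}$. A point $x$ is a down weak beat point if $\hat U_x$ is contractible, an up weak beat point if $\hat F_x$ is contractible, and a weak beat point if it is either. *)

theory Defs
  imports "HOL-Analysis.Homotopy" "Jordan_Normal_Form.Determinant"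
begin

text \<open>A finite T0-space is identified with a finite poset (X, leq). Its topology is the
  Alexandrov topology: open sets are the down-closed subsets of X (so that the minimal
  open set of x is U_x = {y. leq y x}).\<close>

definition finite_poset :: "'a set \<Rightarrow> ('a \<Rightarrow> 'a \<Rightarrow> bool) \<Rightarrow> bool" where
  "finite_poset X leq \<longleftrightarrow> finite X \<and>
     (\<forall>x\<in>X. leq x x) \<and>
     (\<forall>x\<in>X. \<forall>y\<in>X. leq x y \<and> leq y x \<longrightarrow> x = y) \<and>
     (\<forall>x\<in>X. \<forall>y\<in>X. \<forall>z\<in>X. leq x y \<and> leq y z \<longrightarrow> leq x z)"

definition poset_topology :: "'a set \<Rightarrow> ('a \<Rightarrow> 'a \<Rightarrow> bool) \<Rightarrow> 'a topology" where
  "poset_topology X leq = topology (\<lambda>U. U \<subseteq> X \<and> (\<forall>y\<in>U. \<forall>z\<in>X. leq z y \<longrightarrow> z \<in> U))"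

definition hatU :: "'a set \<Rightarrow> ('a \<Rightarrow> 'a \<Rightarrow> bool) \<Rightarrow> 'a \<Rightarrow> 'a set" where
  "hatU X leq x = {y\<in>X. leq y x \<and> y \<noteq> x}"

definition hatF :: "'a set \<Rightarrow> ('a \<Rightarrow> 'a \<Rightarrow> bool) \<Rightarrow> 'a \<Rightarrow> 'a set" where
  "hatF X leq x = {y\<in>X. leq x y \<and> y \<noteq> x}"

text \<open>Contractible in the sense of finite spaces: nonempty and homotopy equivalent to a point.
  (HOL's contractible_space also counts the empty space as contractible, which is excluded.)\<close>
definition contractible_sub :: "'a set \<Rightarrow> ('a \<Rightarrow> 'a \<Rightarrow> bool) \<Rightarrow> 'a set \<Rightarrow> bool" where
  "contractible_sub X leq A \<longleftrightarrow> A \<noteq> {} \<and> contractible_space (subtopology (poset_topology X leq) A)"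

definition down_weak_beat_point :: "'a set \<Rightarrow> ('a \<Rightarrow> 'a \<Rightarrow> bool) \<Rightarrow> 'a \<Rightarrow> bool" where
  "down_weak_beat_point X leq x \<longleftrightarrow> x \<in> X \<and> contractible_sub X leq (hatU X leq x)"

definition up_weak_beat_point :: "'a set \<Rightarrow> ('a \<Rightarrow> 'a \<Rightarrow> bool) \<Rightarrow> 'a \<Rightarrow> bool" where
  "up_weak_beat_point X leq x \<longleftrightarrow> x \<in> X \<and> contractible_sub X leq (hatF X leq x)"

definition weak_beat_point :: "'a set \<Rightarrow> ('a \<Rightarrow> 'a \<Rightarrow> bool) \<Rightarrow> 'a \<Rightarrow> bool" where
  "weak_beat_point X leq x \<longleftrightarrow> down_weak_beat_point X leq x \<or> up_weak_beat_point X leq x"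

definition poset_matrix :: "('a \<Rightarrow> 'a \<Rightarrow> bool) \<Rightarrow> nat \<Rightarrow> (nat \<Rightarrow> 'a) \<Rightarrow> int mat" where
  "poset_matrix leq n f = Matrix.mat n n (\<lambda>(i,j). if leq (f i) (f j) then 0 else 1)"

end

theory Submission
  imports Defs
begin

definition po_on :: "'b set \<Rightarrow> ('b \<Rightarrow> 'b \<Rightarrow> bool) \<Rightarrow> bool" where
  "po_on S R \<longleftrightarrow> (\<forall>x\<in>S. R x x) \<and>
     (\<forall>x\<in>S. \<forall>y\<in>S. R x y \<and> R y x \<longrightarrow> x = y) \<and>
     (\<forall>x\<in>S. \<forall>y\<in>S. \<forall>z\<in>S. R x y \<and> R y z \<longrightarrow> R x z)"

definition pchains :: "('b \<Rightarrow> 'b \<Rightarrow> bool) \<Rightarrow> 'b set \<Rightarrow> 'b set set" where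
  "pchains R B = {c. c \<subseteq> B \<and> (\<forall>x\<in>c. \<forall>y\<in>c. R x y \<or> R y x)}"

definition CC :: "('b \<Rightarrow> 'b \<Rightarrow> bool) \<Rightarrow> 'b set \<Rightarrow> int" where
  "CC R B = (\<Sum>c\<in>pchains R B. (-1) ^ card c)"

definition lw :: "('b \<Rightarrow> 'b \<Rightarrow> bool) \<Rightarrow> 'b \<Rightarrow> 'b set \<Rightarrow> 'b set" where
  "lw R t B = {y\<in>B. R y t \<and> y \<noteq> t}"

lemma po_on_subset: "po_on S R \<Longrightarrow> T \<subseteq> S \<Longrightarrow> po_on T R"
  unfolding po_on_def subset_iff by meson

lemma po_on_dual: "po_on S R \<Longrightarrow> po_on S (\<lambda>x y. R y x)"
  unfolding po_on_def by blast

lemma chains_dual: "pchains (\<lambda>x y. R y x) B = pchains R B"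
  unfolding pchains_def by blast

lemma CC_dual: "CC (\<lambda>x y. R y x) B = CC R B"
proof -
  have "pchains (\<lambda>x y. R y x) B = pchains R B" by (rule chains_dual)
  then show ?thesis by (simp add: CC_def)
qed

lemma finite_pchains: "finite B \<Longrightarrow> finite (pchains R B)"
  by (rule finite_subset[of _ "Pow B"]) (auto simp: pchains_def)

lemma chain_max:
  assumes "finite c" "c \<noteq> {}" "po_on c R" "\<forall>x\<in>c. \<forall>y\<in>c. R x y \<or> R y x"
  shows "\<exists>a\<in>c. \<forall>y\<in>c. R y a"
  using assms
proof (induction c rule: finite_ne_induct)
  case (singleton x)
  then show ?case unfolding po_on_def by auto
next
  case (insert x F)
  have po: "po_on F R" using insert.prems po_on_subset by blast
  obtain m where m: "m \<in> F" "\<forall>y\<in>F. R y m" using insert po by auto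
  show ?case
  proof (cases "R m x")
    case True
    have xF: "x \<in> insert x F" "m \<in> insert x F" using m by auto
    have "\<forall>y\<in>F. R y x"
    proof
      fix y assume "y \<in> F"
      then have "R y m" "y \<in> insert x F" using m by auto
      then show "R y x" using True insert.prems(1) xF unfolding po_on_def by blast
    qed
    moreover have "R x x" using insert.prems(1) unfolding po_on_def by auto
    ultimately show ?thesis by auto
  next
    case False
    then have "R x m" using insert.prems m by auto
    have "\<forall>y\<in>insert x F. R y m"
    proof
      fix y assume "y \<in> insert x F"
      then show "R y m" using \<open>R x m\<close> m by auto
    qed
    then show ?thesis using m by auto
  qed
qed

lemma CC_rec:
  assumes fin: "finite B" and po: "po_on B R"
  shows "CC R B = 1 - (\<Sum>a\<in>B. CC R (lw R a B))"
proof -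
  let ?N = "pchains R B - {{}}"
  have ch: "pchains R B = insert {} ?N" by (auto simp: pchains_def)
  have s1: "CC R B = 1 + sum (\<lambda>c. (-1::int) ^ card c) ?N"
    unfolding CC_def using finite_pchains[OF fin]
    by (subst ch, subst sum.insert) auto
  let ?S = "SIGMA a:B. pchains R (lw R a B)"
  let ?g = "\<lambda>(a, c). insert a c"
  have inj: "inj_on ?g ?S"
  proof (rule inj_onI)
    fix p q assume p: "p \<in> ?S" and q: "q \<in> ?S" and e: "?g p = ?g q"
    obtain a c where pa: "p = (a, c)" by (cases p)
    obtain a' c' where qa: "q = (a', c')" by (cases q)
    have a: "a \<in> B" "c \<subseteq> lw R a B" and a': "a' \<in> B" "c' \<subseteq> lw R a' B"
      using p q pa qa by (auto simp: pchains_def)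
    have e': "insert a c = insert a' c'" using e pa qa by simp
    have "a = a'"
    proof (rule ccontr)
      assume ne: "a \<noteq> a'"
      have "a \<in> insert a' c'" "a' \<in> insert a c" using e' by (metis insertI1)+
      then have "a \<in> c'" "a' \<in> c" using ne by simp_all
      then have "a \<in> lw R a' B" "a' \<in> lw R a B" using a a' by blast+
      then have "R a a'" "R a' a" unfolding lw_def by simp_all
      then show False using ne po a a' unfolding po_on_def by blast
    qed
    moreover have "a \<notin> c" "a' \<notin> c'" using a a' by (auto simp: lw_def)
    ultimately have "c = c'" using e' \<open>a = a'\<close> by (simp add: insert_ident)
    then show "p = q" using pa qa \<open>a = a'\<close> by simp
  qed
  have img: "?g ` ?S = ?N"
  proof
    show "?g ` ?S \<subseteq> ?N"
    proof
      fix d assume "d \<in> ?g ` ?S"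
      then obtain a c where ac: "a \<in> B" "c \<in> pchains R (lw R a B)" "d = insert a c" by auto
      have "R a a" using po ac(1) unfolding po_on_def by blast
      then have "\<forall>x\<in>d. \<forall>y\<in>d. R x y \<or> R y x"
        using ac by (auto simp: pchains_def lw_def)
      moreover have "d \<subseteq> B" using ac by (auto simp: pchains_def lw_def)
      ultimately show "d \<in> ?N" using ac by (auto simp: pchains_def)
    qed
  next
    show "?N \<subseteq> ?g ` ?S"
    proof
      fix d assume d: "d \<in> ?N"
      then have dB: "d \<subseteq> B" "d \<noteq> {}" and tot: "\<forall>x\<in>d. \<forall>y\<in>d. R x y \<or> R y x"
        by (auto simp: pchains_def)
      have "finite d" using dB fin finite_subset by blast
      then obtain a where a: "a \<in> d" "\<forall>y\<in>d. R y a"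
        using chain_max[of d R] dB tot po_on_subset[OF po] by blast
      have "d - {a} \<in> pchains R (lw R a B)"
        using a dB tot by (auto simp: pchains_def lw_def)
      moreover have "d = insert a (d - {a})" using a by auto
      ultimately show "d \<in> ?g ` ?S" using a dB by (auto intro!: image_eqI[of _ _ "(a, d - {a})"])
    qed
  qed
  have "sum (\<lambda>c. (-1::int) ^ card c) ?N = sum (\<lambda>c. (-1::int) ^ card c) (?g ` ?S)"
    using img by simp
  also have "\<dots> = sum ((\<lambda>c. (-1::int) ^ card c) \<circ> ?g) ?S"
    by (rule sum.reindex[OF inj])
  also have "\<dots> = (\<Sum>a\<in>B. \<Sum>c\<in>pchains R (lw R a B). (-1::int) ^ card (insert a c))"
    by (subst sum.Sigma) (auto simp: fin finite_pchains lw_def split_def)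
  also have "\<dots> = (\<Sum>a\<in>B. - CC R (lw R a B))"
  proof (rule sum.cong[OF refl])
    fix a assume "a \<in> B"
    have "(\<Sum>c\<in>pchains R (lw R a B). (-1::int) ^ card (insert a c)) =
          (\<Sum>c\<in>pchains R (lw R a B). - ((-1) ^ card c))"
    proof (rule sum.cong[OF refl])
      fix c assume c: "c \<in> pchains R (lw R a B)"
      then have cs: "c \<subseteq> B" "a \<notin> c" by (auto simp: pchains_def lw_def)
      then have "finite c" using fin finite_subset by blast
      note cs = cs this
      then show "(-1::int) ^ card (insert a c) = - ((-1) ^ card c)" using cs by simp
    qed
    then show "(\<Sum>c\<in>pchains R (lw R a B). (-1::int) ^ card (insert a c)) = - CC R (lw R a B)"
      by (simp add: CC_def sum_negf)
  qed
  finally show ?thesis using s1 by (simp add: sum_negf)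
qed

lemma CC_cone:
  assumes fin: "finite B" and m: "m \<in> B" and cmp: "\<forall>z\<in>B. R z m \<or> R m z"
  shows "CC R B = 0"
proof -
  let ?A0 = "{c\<in>pchains R B. m \<notin> c}"
  let ?A1 = "{c\<in>pchains R B. m \<in> c}"
  have fA: "finite ?A0" "finite ?A1" using finite_pchains[OF fin] finite_pchains[of "X - {x}"] fin by auto
  have un: "pchains R B = ?A0 \<union> ?A1" by auto
  have s: "CC R B = sum (\<lambda>c. (-1::int) ^ card c) ?A0 + sum (\<lambda>c. (-1::int) ^ card c) ?A1"
    unfolding CC_def by (subst un, rule sum.union_disjoint) (use fA in auto)
  have img: "?A1 = insert m ` ?A0"
  proof
    show "?A1 \<subseteq> insert m ` ?A0"
    proof
      fix c assume c: "c \<in> ?A1"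
      then have "c - {m} \<in> ?A0" by (auto simp: pchains_def)
      moreover have "c = insert m (c - {m})" using c by auto
      ultimately show "c \<in> insert m ` ?A0" by blast
    qed
  next
    show "insert m ` ?A0 \<subseteq> ?A1"
    proof
      fix d assume "d \<in> insert m ` ?A0"
      then obtain c where c: "c \<in> ?A0" "d = insert m c" by auto
      have "R m m" using cmp m by auto
      then show "d \<in> ?A1" using c cmp m by (auto simp: pchains_def)
    qed
  qed
  have inj: "inj_on (insert m) ?A0"
    by (rule inj_onI) (metis (no_types, lifting) mem_Collect_eq insert_ident)
  have "sum (\<lambda>c. (-1::int) ^ card c) ?A1 = sum ((\<lambda>c. (-1::int) ^ card c) \<circ> insert m) ?A0"
    unfolding img by (rule sum.reindex[OF inj])
  also have "\<dots> = sum (\<lambda>c. - ((-1::int) ^ card c)) ?A0"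
  proof (rule sum.cong[OF refl])
    fix c assume c: "c \<in> ?A0"
    then have "finite c" "m \<notin> c" using fin by (auto simp: pchains_def dest: finite_subset)
    then show "((\<lambda>c. (-1::int) ^ card c) \<circ> insert m) c = - ((-1::int) ^ card c)" by simp
  qed
  finally show ?thesis using s by (simp add: sum_negf)
qed

definition up :: "('b \<Rightarrow> 'b \<Rightarrow> bool) \<Rightarrow> 'b \<Rightarrow> 'b set \<Rightarrow> 'b set" where
  "up R t B = {y\<in>B. R t y \<and> y \<noteq> t}"

lemma lw_dual: "lw (\<lambda>x y. R y x) t B = up R t B"
  unfolding lw_def up_def by simp

lemma CC_remove_point:
  assumes fin: "finite X" and po: "po_on X R" and x: "x \<in> X"
    and z: "CC R (lw R x X) = 0"
  shows "CC R X = CC R (X - {x})"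
proof -
  let ?A1 = "{c\<in>pchains R X. x \<in> c}"
  have fA: "finite (pchains R (X - {x}))" "finite ?A1" using finite_pchains[OF fin] finite_pchains[of "X - {x}"] fin by auto
  have un: "pchains R X = pchains R (X - {x}) \<union> ?A1" by (auto simp: pchains_def)
  have s: "CC R X = CC R (X - {x}) + sum (\<lambda>c. (-1::int) ^ card c) ?A1"
    unfolding CC_def by (subst un, rule sum.union_disjoint) (use fA in \<open>auto simp: pchains_def\<close>)
  let ?P = "pchains R (lw R x X) \<times> pchains R (up R x X)"
  let ?g = "\<lambda>(L, G). insert x (L \<union> G)"
  have Rxx: "R x x" using po x unfolding po_on_def by blast
  have img: "?A1 = ?g ` ?P"
  proof
    show "?A1 \<subseteq> ?g ` ?P"
    proof
      fix c assume c: "c \<in> ?A1"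
      then have cX: "c \<subseteq> X" and tot: "\<forall>a\<in>c. \<forall>b\<in>c. R a b \<or> R b a" and xc: "x \<in> c"
        by (auto simp: pchains_def)
      let ?L = "c \<inter> lw R x X" and ?G = "c \<inter> up R x X"
      have "?L \<in> pchains R (lw R x X)" "?G \<in> pchains R (up R x X)" using tot by (auto simp: pchains_def)
      moreover have "c = insert x (?L \<union> ?G)"
      proof
        show "c \<subseteq> insert x (?L \<union> ?G)"
        proof
          fix y assume "y \<in> c"
          then show "y \<in> insert x (?L \<union> ?G)" using tot xc cX by (auto simp: lw_def up_def)
        qed
      qed (use xc in auto)
      ultimately show "c \<in> ?g ` ?P" by (auto intro!: image_eqI[of _ _ "(?L, ?G)"])
    qed
  next
    show "?g ` ?P \<subseteq> ?A1"
    proof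
      fix d assume "d \<in> ?g ` ?P"
      then obtain L G where LG: "L \<in> pchains R (lw R x X)" "G \<in> pchains R (up R x X)" "d = insert x (L \<union> G)"
        by auto
      have L: "L \<subseteq> X" "\<forall>a\<in>L. R a x" "\<forall>a\<in>L. \<forall>b\<in>L. R a b \<or> R b a"
        using LG by (auto simp: pchains_def lw_def)
      have G: "G \<subseteq> X" "\<forall>a\<in>G. R x a" "\<forall>a\<in>G. \<forall>b\<in>G. R a b \<or> R b a"
        using LG by (auto simp: pchains_def up_def)
      have LGc: "\<forall>a\<in>L. \<forall>b\<in>G. R a b"
      proof (intro ballI)
        fix a b assume "a \<in> L" "b \<in> G"
        then show "R a b" using L G po x unfolding po_on_def by (meson subsetD)
      qed
      have "\<forall>a\<in>d. \<forall>b\<in>d. R a b \<or> R b a"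
        using L G LGc Rxx LG(3) by blast
      then show "d \<in> ?A1" using L G x LG(3) by (auto simp: pchains_def)
    qed
  qed
  have inj: "inj_on ?g ?P"
  proof (rule inj_onI)
    fix p q assume p: "p \<in> ?P" and q: "q \<in> ?P" and e: "?g p = ?g q"
    obtain L G where pa: "p = (L, G)" by (cases p)
    obtain L' G' where qa: "q = (L', G')" by (cases q)
    have sub: "L \<subseteq> lw R x X" "G \<subseteq> up R x X" "L' \<subseteq> lw R x X" "G' \<subseteq> up R x X"
      using p q pa qa by (auto simp: pchains_def)
    have disj: "lw R x X \<inter> up R x X = {}" "x \<notin> lw R x X" "x \<notin> up R x X"
      using po x unfolding lw_def up_def po_on_def by auto
    have e': "insert x (L \<union> G) = insert x (L' \<union> G')" using e pa qa by simp
    have "L = insert x (L \<union> G) \<inter> lw R x X" using sub disj by blast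
    also have "\<dots> = insert x (L' \<union> G') \<inter> lw R x X" using e' by simp
    also have "\<dots> = L'" using sub disj by blast
    finally have "L = L'" .
    have "G = insert x (L \<union> G) \<inter> up R x X" using sub disj by blast
    also have "\<dots> = insert x (L' \<union> G') \<inter> up R x X" using e' by simp
    also have "\<dots> = G'" using sub disj by blast
    finally have "G = G'" .
    then show "p = q" using pa qa \<open>L = L'\<close> by simp
  qed
  have finL: "finite (lw R x X)" "finite (up R x X)" using fin by (auto simp: lw_def up_def)
  have "sum (\<lambda>c. (-1::int) ^ card c) ?A1 = sum ((\<lambda>c. (-1::int) ^ card c) \<circ> ?g) ?P"
    unfolding img by (rule sum.reindex[OF inj])
  also have "\<dots> = (\<Sum>p\<in>?P. - ((-1::int) ^ card (fst p) * (-1) ^ card (snd p)))"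
  proof (rule sum.cong[OF refl])
    fix p assume p: "p \<in> ?P"
    obtain L G where pa: "p = (L, G)" by (cases p)
    have sub: "L \<subseteq> lw R x X" "G \<subseteq> up R x X"
      using p pa by (auto simp: pchains_def)
    have disj: "lw R x X \<inter> up R x X = {}" "x \<notin> lw R x X" "x \<notin> up R x X"
      using po x unfolding lw_def up_def po_on_def by auto
    have fLG: "finite L" "finite G" using sub finL finite_subset by blast+
    have LG0: "L \<inter> G = {}" using sub disj by blast
    have xLG: "x \<notin> L \<union> G" using sub disj by blast
    have "card (insert x (L \<union> G)) = Suc (card (L \<union> G))" using fLG xLG by simp
    also have "card (L \<union> G) = card L + card G" using fLG LG0 by (rule card_Un_disjoint)
    finally have "card (insert x (L \<union> G)) = Suc (card L + card G)" .
    then show "((\<lambda>c. (-1::int) ^ card c) \<circ> ?g) p = - ((-1::int) ^ card (fst p) * (-1) ^ card (snd p))"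
      using pa by (simp add: power_add)
  qed
  also have "\<dots> = - (CC R (lw R x X) * CC R (up R x X))"
    unfolding CC_def sum_product sum.cartesian_product sum_negf by (simp add: split_def)
  finally show ?thesis using s z by simp
qed

lemma CC_remove_point_up:
  assumes fin: "finite X" and po: "po_on X R" and x: "x \<in> X"
    and z: "CC R (up R x X) = 0"
  shows "CC R X = CC R (X - {x})"
proof -
  have "CC (\<lambda>a b. R b a) (lw (\<lambda>a b. R b a) x X) = 0"
    using z CC_dual[of R "up R x X"] by (simp only: lw_dual)
  then have "CC (\<lambda>a b. R b a) X = CC (\<lambda>a b. R b a) (X - {x})"
    using CC_remove_point[OF fin po_on_dual[OF po] x] by blast
  then show ?thesis using CC_dual[of R X] CC_dual[of R "X - {x}"] by simp
qed

lemma CC_transport: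
  assumes f: "bij_betw f I X"
  shows "CC (\<lambda>i j. R (f i) (f j)) I = CC R X"
proof -
  have inj: "inj_on f I" and im: "f ` I = X" using f by (auto simp: bij_betw_def)
  show ?thesis unfolding CC_def
  proof (rule sum.reindex_bij_witness[of _ "\<lambda>d. {i\<in>I. f i \<in> d}" "\<lambda>c. f ` c"])
    fix c assume c: "c \<in> pchains (\<lambda>i j. R (f i) (f j)) I"
    then have cI: "c \<subseteq> I" by (auto simp: pchains_def)
    show "{i \<in> I. f i \<in> f ` c} = c" using cI inj by (auto simp: inj_on_def)
    show "f ` c \<in> pchains R X" using c im by (auto simp: pchains_def)
    show "(-1::int) ^ card (f ` c) = (-1) ^ card c"
      using card_image[OF inj_on_subset[OF inj cI]] by simp
  next
    fix d assume d: "d \<in> pchains R X"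
    then have dX: "d \<subseteq> X" by (auto simp: pchains_def)
    show "f ` {i \<in> I. f i \<in> d} = d" using dX im by auto
    show "{i \<in> I. f i \<in> d} \<in> pchains (\<lambda>i j. R (f i) (f j)) I" using d by (auto simp: pchains_def)
  qed
qed

lemma po_transport:
  assumes f: "bij_betw f I X" and po: "po_on X R"
  shows "po_on I (\<lambda>i j. R (f i) (f j))"
proof -
  have fx: "\<And>i. i \<in> I \<Longrightarrow> f i \<in> X" and inj: "inj_on f I" using f by (auto simp: bij_betw_def)
  show ?thesis unfolding po_on_def
  proof (intro conjI ballI impI)
    fix i assume "i \<in> I" then show "R (f i) (f i)" using po fx unfolding po_on_def by blast
  next
    fix i j assume ij: "i \<in> I" "j \<in> I" "R (f i) (f j) \<and> R (f j) (f i)"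
    then have "f i = f j" using po fx unfolding po_on_def by blast
    then show "i = j" using inj ij by (auto simp: inj_on_def)
  next
    fix i j k assume ij: "i \<in> I" "j \<in> I" "k \<in> I" "R (f i) (f j) \<and> R (f j) (f k)"
    then show "R (f i) (f k)" using po fx unfolding po_on_def by blast
  qed
qed


definition vperms :: "('b \<Rightarrow> 'b \<Rightarrow> bool) \<Rightarrow> 'b set \<Rightarrow> 'b set \<Rightarrow> ('b \<Rightarrow> 'b) set" where
  "vperms R S E = {p. p permutes S \<and> (\<forall>i\<in>S - E. R i (p i))}"

definition Vs :: "('b \<Rightarrow> 'b \<Rightarrow> bool) \<Rightarrow> 'b set \<Rightarrow> 'b \<Rightarrow> int" where
  "Vs R S t = (\<Sum>p\<in>vperms R S {t}. sign p)"

lemma finite_vperms: "finite S \<Longrightarrow> finite (vperms R S E)"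
  by (rule finite_subset[OF _ finite_permutations[of S]]) (auto simp: vperms_def)

lemma valid_id:
  assumes fin: "finite S" and po: "po_on S R" and p: "p permutes S"
    and v: "\<forall>i\<in>S. R i (p i)"
  shows "p = id"
proof -
  define h where "h i = card {j\<in>S. R j i}" for i
  have pS: "\<And>i. i \<in> S \<Longrightarrow> p i \<in> S" by (simp add: permutes_in_image[OF p])
  have sub: "\<And>i. i \<in> S \<Longrightarrow> {j\<in>S. R j i} \<subseteq> {j\<in>S. R j (p i)}"
  proof -
    fix i assume i: "i \<in> S"
    show "{j\<in>S. R j i} \<subseteq> {j\<in>S. R j (p i)}"
    proof
      fix j assume "j \<in> {j\<in>S. R j i}"
      then have "j \<in> S" "R j i" by auto
      moreover have "R i (p i)" using v i by blast
      ultimately show "j \<in> {j\<in>S. R j (p i)}" using po i pS[OF i] unfolding po_on_def by blast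
    qed
  qed
  have le: "\<And>i. i \<in> S \<Longrightarrow> h i \<le> (h \<circ> p) i"
    unfolding h_def o_def using sub fin by (intro card_mono) auto
  have eq: "sum h S = sum (h \<circ> p) S" by (rule sum.permute[OF p])
  have "\<And>i. i \<in> S \<Longrightarrow> h i = (h \<circ> p) i"
    using sum_mono_inv[OF eq le _ fin] by blast
  then have seteq: "\<And>i. i \<in> S \<Longrightarrow> {j\<in>S. R j i} = {j\<in>S. R j (p i)}"
    using sub fin unfolding h_def o_def
    by (metis (no_types, lifting) card_subset_eq finite_subset mem_Collect_eq subsetI)
  have "\<And>i. p i = i"
  proof -
    fix i show "p i = i"
    proof (cases "i \<in> S")
      case True
      have "R (p i) (p i)" using po pS[OF True] unfolding po_on_def by blast
      then have "p i \<in> {j\<in>S. R j i}" using seteq[OF True] pS[OF True] by blast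
      then have "R (p i) i" by simp
      moreover have "R i (p i)" using v True by blast
      ultimately show ?thesis using po True pS[OF True] unfolding po_on_def by blast
    next
      case False
      then show ?thesis using permutes_not_in[OF p] by blast
    qed
  qed
  then show ?thesis by (simp add: fun_eq_iff)
qed

lemma vperms_empty:
  assumes fin: "finite S" and po: "po_on S R"
  shows "vperms R S {} = {id}"
proof -
  have "R i i" if "i \<in> S" for i using po that unfolding po_on_def by blast
  then have "id \<in> vperms R S {}" by (auto simp: vperms_def permutes_id)
  moreover have "p = id" if "p \<in> vperms R S {}" for p
    using valid_id[OF fin po] that by (auto simp: vperms_def)
  ultimately show ?thesis by blast
qed

lemma permutes_fix_remove:
  assumes p: "p permutes S" and t: "p t = t"
  shows "p permutes (S - {t})"
  using p t unfolding permutes_def by auto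

lemma perm_transpose_sign:
  assumes fin: "finite S" and p: "p permutes S" and a: "a \<in> S" and b: "b \<in> S" and ab: "a \<noteq> b"
  shows "sign (p \<circ> Transposition.transpose a b) = - sign p"
proof -
  have "permutation p" using p fin permutation_permutes by blast
  moreover have "permutation (Transposition.transpose a b)"
    using permutes_swap_id[OF a b] fin permutation_permutes by blast
  ultimately show ?thesis by (simp add: sign_compose sign_swap_id ab)
qed

lemma Vs_rec:
  assumes fin: "finite S" and po: "po_on S R" and t: "t \<in> S"
  shows "Vs R S t = 1 - (\<Sum>a\<in>lw R t S. Vs R (S - {t}) a)"
proof -
  let ?P = "vperms R S {t}"
  let ?T = "insert t (lw R t S)"
  have finP: "finite ?P" using finite_vperms[OF fin] .
  have finT: "finite ?T" using fin by (auto simp: lw_def)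
  have gP: "(\<lambda>p. Hilbert_Choice.inv p t) ` ?P \<subseteq> ?T"
  proof
    fix y assume "y \<in> (\<lambda>p. Hilbert_Choice.inv p t) ` ?P"
    then obtain p where p: "p \<in> ?P" "y = Hilbert_Choice.inv p t" by auto
    have pp: "p permutes S" and v: "\<forall>i\<in>S - {t}. R i (p i)" using p by (auto simp: vperms_def)
    have yS: "y \<in> S" using p(2) permutes_inv[OF pp] t permutes_in_image by metis
    have py: "p y = t" using p(2) permutes_inverses[OF pp] by simp
    show "y \<in> ?T"
    proof (cases "y = t")
      case False
      then have "R y t" using v yS py by force
      then show ?thesis using False yS by (auto simp: lw_def)
    qed simp
  qed
  have "Vs R S t = (\<Sum>y\<in>?T. \<Sum>p\<in>{p\<in>?P. Hilbert_Choice.inv p t = y}. sign p)"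
    unfolding Vs_def by (rule sum.group[OF finP finT gP, symmetric])
  also have "\<dots> = (\<Sum>p\<in>{p\<in>?P. Hilbert_Choice.inv p t = t}. sign p) + (\<Sum>y\<in>lw R t S. \<Sum>p\<in>{p\<in>?P. Hilbert_Choice.inv p t = y}. sign p)"
    by (rule sum.insert) (use fin in \<open>auto simp: lw_def\<close>)
  also have "(\<Sum>p\<in>{p\<in>?P. Hilbert_Choice.inv p t = t}. sign p) = 1"
  proof -
    have "{p\<in>?P. Hilbert_Choice.inv p t = t} = {id}"
    proof
      show "{p\<in>?P. Hilbert_Choice.inv p t = t} \<subseteq> {id}"
      proof
        fix p assume p: "p \<in> {p\<in>?P. Hilbert_Choice.inv p t = t}"
        then have pp: "p permutes S" and v: "\<forall>i\<in>S - {t}. R i (p i)" and it: "Hilbert_Choice.inv p t = t"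
          by (auto simp: vperms_def)
        have "p t = t" using it permutes_inv_eq[OF pp] by blast
        then have "\<forall>i\<in>S. R i (p i)" using v po t unfolding po_on_def by (metis DiffI singletonD)
        then show "p \<in> {id}" using valid_id[OF fin po pp] by simp
      qed
    next
      have "R i i" if "i \<in> S" for i using po that unfolding po_on_def by blast
      then show "{id} \<subseteq> {p\<in>?P. Hilbert_Choice.inv p t = t}" by (auto simp: vperms_def permutes_id)
    qed
    then show ?thesis by simp
  qed
  also have "(\<Sum>y\<in>lw R t S. \<Sum>p\<in>{p\<in>?P. Hilbert_Choice.inv p t = y}. sign p) = (\<Sum>a\<in>lw R t S. - Vs R (S - {t}) a)"
  proof (rule sum.cong[OF refl])
    fix a assume a: "a \<in> lw R t S"
    then have aS: "a \<in> S" and at: "a \<noteq> t" and Rat: "R a t" by (auto simp: lw_def)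
    let ?tau = "Transposition.transpose a t"
    have tau: "?tau permutes S" using permutes_swap_id[OF aS t] .
    have "(\<Sum>p\<in>{p\<in>?P. Hilbert_Choice.inv p t = a}. sign p) = (\<Sum>q\<in>vperms R (S - {t}) {a}. - sign q)"
    proof (rule sum.reindex_bij_witness[of _ "\<lambda>q. q \<circ> ?tau" "\<lambda>p. p \<circ> ?tau"])
      fix p assume p: "p \<in> {p\<in>?P. Hilbert_Choice.inv p t = a}"
      then have pp: "p permutes S" and v: "\<forall>i\<in>S - {t}. R i (p i)" and it: "Hilbert_Choice.inv p t = a"
        by (auto simp: vperms_def)
      have pa: "p a = t" using it permutes_inv_eq[OF pp] by blast
      show "p \<circ> ?tau \<circ> ?tau = p" by (simp add: fun_eq_iff)
      have c: "p \<circ> ?tau permutes S" using permutes_compose[OF tau pp] .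
      have "(p \<circ> ?tau) t = t" using pa by simp
      then have c': "p \<circ> ?tau permutes S - {t}" using permutes_fix_remove[OF c] by blast
      have "\<forall>i\<in>S - {t} - {a}. R i ((p \<circ> ?tau) i)" using v by auto
      then show "p \<circ> ?tau \<in> vperms R (S - {t}) {a}" using c' by (auto simp: vperms_def)
      show "- sign (p \<circ> ?tau) = sign p"
        using perm_transpose_sign[OF fin pp aS t at] by simp
    next
      fix q assume q: "q \<in> vperms R (S - {t}) {a}"
      then have qp: "q permutes S - {t}" and v: "\<forall>i\<in>S - {t} - {a}. R i (q i)"
        by (auto simp: vperms_def)
      show "q \<circ> ?tau \<circ> ?tau = q" by (simp add: fun_eq_iff)
      have qS: "q permutes S" using permutes_subset[OF qp] by blast
      have c: "q \<circ> ?tau permutes S" using permutes_compose[OF tau qS] .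
      have qt: "q t = t" using permutes_not_in[OF qp] by blast
      then have "(q \<circ> ?tau) a = t" by simp
      then have ia: "Hilbert_Choice.inv (q \<circ> ?tau) t = a" using permutes_inv_eq[OF c] by blast
      have "\<forall>i\<in>S - {t}. R i ((q \<circ> ?tau) i)"
      proof
        fix i assume i: "i \<in> S - {t}"
        show "R i ((q \<circ> ?tau) i)"
        proof (cases "i = a")
          case True
          then show ?thesis using qt Rat by simp
        next
          case False
          then have "(q \<circ> ?tau) i = q i" using i by auto
          then show ?thesis using v i False by auto
        qed
      qed
      then show "q \<circ> ?tau \<in> {p\<in>?P. Hilbert_Choice.inv p t = a}" using c ia by (auto simp: vperms_def)
    qed
    then show "(\<Sum>p\<in>{p\<in>?P. Hilbert_Choice.inv p t = a}. sign p) = - Vs R (S - {t}) a"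
      by (simp add: Vs_def sum_negf)
  qed
  finally show ?thesis by (simp add: sum_negf)
qed

lemma Vs_CC:
  "finite S \<Longrightarrow> po_on S R \<Longrightarrow> t \<in> S \<Longrightarrow> Vs R S t = CC R (lw R t S)"
proof (induction "card S" arbitrary: S t rule: less_induct)
  case less
  note fin = less.prems(1) and po = less.prems(2) and t = less.prems(3)
  have "Vs R S t = 1 - (\<Sum>a\<in>lw R t S. Vs R (S - {t}) a)" by (rule Vs_rec[OF fin po t])
  also have "\<dots> = 1 - (\<Sum>a\<in>lw R t S. CC R (lw R a (lw R t S)))"
  proof -
    have "Vs R (S - {t}) a = CC R (lw R a (lw R t S))" if a: "a \<in> lw R t S" for a
    proof -
      have "card (S - {t}) < card S" using fin t by (rule card_Diff1_less)
      moreover have "finite (S - {t})" using fin by simp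
      moreover have "po_on (S - {t}) R" using po po_on_subset by blast
      moreover have "a \<in> S - {t}" using a by (auto simp: lw_def)
      ultimately have "Vs R (S - {t}) a = CC R (lw R a (S - {t}))" using less.hyps by blast
      moreover have "lw R a (S - {t}) = lw R a (lw R t S)"
      proof -
        have aS: "a \<in> S" "R a t" using a by (auto simp: lw_def)
        have "y \<in> lw R a (S - {t}) \<longleftrightarrow> y \<in> lw R a (lw R t S)" for y
        proof
          assume y: "y \<in> lw R a (S - {t})"
          then have "y \<in> S" "R y a" "y \<noteq> t" by (auto simp: lw_def)
          then have "R y t" using aS po t unfolding po_on_def by blast
          then show "y \<in> lw R a (lw R t S)" using y by (auto simp: lw_def)
        next
          assume "y \<in> lw R a (lw R t S)"
          then show "y \<in> lw R a (S - {t})" by (auto simp: lw_def)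
        qed
        then show ?thesis by blast
      qed
      ultimately show ?thesis by simp
    qed
    then show ?thesis by simp
  qed
  also have "\<dots> = CC R (lw R t S)"
  proof (rule CC_rec[symmetric])
    show "finite (lw R t S)" using fin by (auto simp: lw_def)
    show "po_on (lw R t S) R" by (rule po_on_subset[OF po]) (auto simp: lw_def)
  qed
  finally show ?case .
qed


definition detL :: "'b set \<Rightarrow> ('b \<Rightarrow> 'b \<Rightarrow> int) \<Rightarrow> int" where
  "detL S M = (\<Sum>p\<in>{p. p permutes S}. sign p * (\<Prod>i\<in>S. M i (p i)))"

lemma W_two:
  assumes fin: "finite S" and T: "T \<subseteq> S" and a: "a \<in> T" and b: "b \<in> T" and ab: "a \<noteq> b"
  shows "(\<Sum>p\<in>vperms R S T. sign p) = 0"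
proof -
  let ?tau = "Transposition.transpose a b"
  have aS: "a \<in> S" and bS: "b \<in> S" using a b T by auto
  have tau: "?tau permutes S" using permutes_swap_id[OF aS bS] .
  have inv: "p \<circ> ?tau \<circ> ?tau = p" for p :: "'a \<Rightarrow> 'a" by (simp add: fun_eq_iff)
  have mem: "p \<circ> ?tau \<in> vperms R S T" if p: "p \<in> vperms R S T" for p
  proof -
    have pp: "p permutes S" and v: "\<forall>i\<in>S - T. R i (p i)" using p by (auto simp: vperms_def)
    have c: "p \<circ> ?tau permutes S" using permutes_compose[OF tau pp] .
    have "\<forall>i\<in>S - T. R i ((p \<circ> ?tau) i)"
    proof
      fix i assume i: "i \<in> S - T"
      then have "i \<noteq> a" "i \<noteq> b" using a b by auto
      then show "R i ((p \<circ> ?tau) i)" using v i by simp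
    qed
    then show ?thesis using c by (auto simp: vperms_def)
  qed
  have sg: "- sign (p \<circ> ?tau) = sign p" if p: "p \<in> vperms R S T" for p
  proof -
    have pp: "p permutes S" using p by (auto simp: vperms_def)
    show ?thesis using perm_transpose_sign[OF fin pp aS bS ab] by simp
  qed
  have "(\<Sum>p\<in>vperms R S T. sign p) = (\<Sum>p\<in>vperms R S T. - sign p)"
  proof (rule sum.reindex_bij_witness[of _ "\<lambda>q. q \<circ> ?tau" "\<lambda>p. p \<circ> ?tau"])
    fix p assume p: "p \<in> vperms R S T"
    show "p \<circ> ?tau \<circ> ?tau = p" by (rule inv)
    show "p \<circ> ?tau \<in> vperms R S T" using mem[OF p] .
    show "p \<circ> ?tau \<circ> ?tau = p" by (rule inv)
    show "p \<circ> ?tau \<in> vperms R S T" using mem[OF p] .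
    show "- sign (p \<circ> ?tau) = sign p" using sg[OF p] .
  qed
  then show ?thesis by (simp add: sum_negf)
qed

lemma sum_Pow_small:
  assumes fin: "finite S"
    and z: "\<And>T a b. T \<subseteq> S \<Longrightarrow> a \<in> T \<Longrightarrow> b \<in> T \<Longrightarrow> a \<noteq> b \<Longrightarrow> g T = 0"
  shows "sum g (Pow S) = g {} + (\<Sum>t\<in>S. g {t})"
proof -
  let ?A = "insert {} ((\<lambda>t. {t}) ` S)"
  have sub: "?A \<subseteq> Pow S" by auto
  have "sum g (Pow S) = sum g ?A"
  proof (rule sum.mono_neutral_right[OF _ sub])
    show "finite (Pow S)" using fin by simp
    show "\<forall>i\<in>Pow S - ?A. g i = 0"
    proof
      fix T assume T: "T \<in> Pow S - ?A"
      then have "T \<noteq> {}" "\<forall>t. T \<noteq> {t}" by auto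
      then obtain a b where "a \<in> T" "b \<in> T" "a \<noteq> b" by (metis ex_in_conv is_singletonI' is_singleton_the_elem)
      then show "g T = 0" using z T by blast
    qed
  qed
  also have "\<dots> = g {} + sum g ((\<lambda>t. {t}) ` S)"
    by (rule sum.insert) (use fin in auto)
  also have "sum g ((\<lambda>t. {t}) ` S) = (\<Sum>t\<in>S. g {t})"
    by (subst sum.reindex) (auto simp: inj_on_def)
  finally show ?thesis .
qed

lemma prod_ind:
  fixes R :: "'b \<Rightarrow> 'b \<Rightarrow> bool"
  assumes fin: "finite A"
  shows "(\<Prod>i\<in>A. (if R i (p i) then -1 else 0::int)) = (-1) ^ card A * (if \<forall>i\<in>A. R i (p i) then 1 else 0)"
proof (cases "\<forall>i\<in>A. R i (p i)")
  case True
  then have "(\<Prod>i\<in>A. (if R i (p i) then -1 else 0::int)) = (\<Prod>i\<in>A. -1)"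
    by (intro prod.cong) auto
  then show ?thesis using True by simp
next
  case False
  then obtain i where "i \<in> A" "\<not> R i (p i)" by blast
  then have "(\<Prod>i\<in>A. (if R i (p i) then -1 else 0::int)) = 0"
    using fin by (intro prod_zero) auto
  then show ?thesis using False by simp
qed

lemma det_CC:
  assumes fin: "finite S" and po: "po_on S R"
  shows "detL S (\<lambda>i j. if R i j then 0 else 1) = (-1) ^ card S * CC R S"
proof -
  let ?Perm = "{p. p permutes S}"
  let ?W = "\<lambda>T. (\<Sum>p\<in>vperms R S T. sign p)"
  have finP: "finite ?Perm" using finite_permutations[OF fin] .
  have step1: "(\<Prod>i\<in>S. (if R i (p i) then 0 else 1::int)) =
      (\<Sum>T\<in>Pow S. (-1) ^ card (S - T) * (if \<forall>i\<in>S - T. R i (p i) then 1 else 0))" for p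
  proof -
    have "(\<Prod>i\<in>S. (if R i (p i) then 0 else 1::int)) = (\<Prod>i\<in>S. 1 + (if R i (p i) then -1 else 0))"
      by (intro prod.cong) auto
    also have "\<dots> = (\<Sum>T\<in>Pow S. (\<Prod>i\<in>T. 1) * (\<Prod>i\<in>S - T. (if R i (p i) then -1 else 0::int)))"
      by (rule prod_add[OF fin])
    also have "\<dots> = (\<Sum>T\<in>Pow S. (-1) ^ card (S - T) * (if \<forall>i\<in>S - T. R i (p i) then 1 else 0))"
      using fin by (intro sum.cong refl) (simp add: prod_ind)
    finally show ?thesis .
  qed
  have "detL S (\<lambda>i j. if R i j then 0 else 1) =
      (\<Sum>p\<in>?Perm. \<Sum>T\<in>Pow S. sign p * ((-1) ^ card (S - T) * (if \<forall>i\<in>S - T. R i (p i) then 1 else 0)))"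
    unfolding detL_def step1 by (simp add: sum_distrib_left)
  also have "\<dots> = (\<Sum>T\<in>Pow S. \<Sum>p\<in>?Perm. sign p * ((-1) ^ card (S - T) * (if \<forall>i\<in>S - T. R i (p i) then 1 else 0)))"
    by (rule sum.swap)
  also have "\<dots> = (\<Sum>T\<in>Pow S. (-1) ^ card (S - T) * ?W T)"
  proof (rule sum.cong[OF refl])
    fix T
    have "(\<Sum>p\<in>?Perm. sign p * ((-1) ^ card (S - T) * (if \<forall>i\<in>S - T. R i (p i) then 1 else 0))) =
        (-1) ^ card (S - T) * (\<Sum>p\<in>?Perm. (if \<forall>i\<in>S - T. R i (p i) then sign p else 0))"
      by (simp add: sum_distrib_left) (intro sum.cong refl, simp)
    also have "(\<Sum>p\<in>?Perm. (if \<forall>i\<in>S - T. R i (p i) then sign p else 0)) = ?W T"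
      unfolding vperms_def using sum.inter_filter[OF finP, of sign "\<lambda>p. \<forall>i\<in>S - T. R i (p i)"]
      by simp
    finally show "(\<Sum>p\<in>?Perm. sign p * ((-1) ^ card (S - T) * (if \<forall>i\<in>S - T. R i (p i) then 1 else 0))) =
        (-1) ^ card (S - T) * ?W T" .
  qed
  also have "\<dots> = (-1) ^ card (S - {}) * ?W {} + (\<Sum>t\<in>S. (-1) ^ card (S - {t}) * ?W {t})"
    by (rule sum_Pow_small[OF fin]) (simp add: W_two[OF fin])
  also have "?W {} = 1" using vperms_empty[OF fin po] by simp
  also have "(\<Sum>t\<in>S. (-1) ^ card (S - {t}) * ?W {t}) = (\<Sum>t\<in>S. - ((-1) ^ card S * CC R (lw R t S)))"
  proof (rule sum.cong[OF refl])
    fix t assume t: "t \<in> S"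
    have "?W {t} = CC R (lw R t S)" using Vs_CC[OF fin po t] by (simp add: Vs_def)
    moreover obtain k where "card (S - {t}) = k" "card S = Suc k"
      using card_Suc_Diff1[OF fin t] by metis
    ultimately show "(-1) ^ card (S - {t}) * ?W {t} = - ((-1) ^ card S * CC R (lw R t S))" by simp
  qed
  finally have "detL S (\<lambda>i j. if R i j then 0 else 1) = (-1) ^ card S * (1 - (\<Sum>t\<in>S. CC R (lw R t S)))"
    by (simp add: sum_negf sum_distrib_left algebra_simps)
  also have "\<dots> = (-1) ^ card S * CC R S" using CC_rec[OF fin po] by simp
  finally show ?thesis .
qed

lemma det_poset_matrix:
  "det (poset_matrix leq n f) = detL {0..<n} (\<lambda>i j. if leq (f i) (f j) then 0 else 1)"
proof -
  have c: "poset_matrix leq n f \<in> carrier_mat n n" unfolding poset_matrix_def by simp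
  show ?thesis unfolding det_def'[OF c] detL_def
  proof (rule sum.cong[OF refl])
    fix p assume "p \<in> {p. p permutes {0..<n}}"
    then have pp: "p permutes {0..<n}" by simp
    have "(\<Prod>i = 0..<n. poset_matrix leq n f $$ (i, p i)) = (\<Prod>i\<in>{0..<n}. if leq (f i) (f (p i)) then 0 else 1)"
    proof (rule prod.cong[OF refl])
      fix i assume i: "i \<in> {0..<n}"
      then have "p i \<in> {0..<n}" using permutes_in_image[OF pp] by simp
      then show "poset_matrix leq n f $$ (i, p i) = (if leq (f i) (f (p i)) then 0 else 1)"
        using i unfolding poset_matrix_def by simp
    qed
    then show "signof p * (\<Prod>i = 0..<n. poset_matrix leq n f $$ (i, p i)) =
        sign p * (\<Prod>i\<in>{0..<n}. if leq (f i) (f (p i)) then 0 else 1)" by simp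
  qed
qed


definition cmpf :: "('b \<Rightarrow> 'b \<Rightarrow> bool) \<Rightarrow> 'b set \<Rightarrow> ('b \<Rightarrow> 'b) \<Rightarrow> ('b \<Rightarrow> 'b) \<Rightarrow> bool" where
  "cmpf R A f g \<longleftrightarrow> f ` A \<subseteq> A \<and> g ` A \<subseteq> A \<and>
     (\<forall>x\<in>A. \<forall>y\<in>A. R x y \<longrightarrow> R (f x) (f y)) \<and> (\<forall>x\<in>A. \<forall>y\<in>A. R x y \<longrightarrow> R (g x) (g y)) \<and>
     ((\<forall>y\<in>A. R (f y) (g y)) \<or> (\<forall>y\<in>A. R (g y) (f y)))"

definition down_beat :: "('b \<Rightarrow> 'b \<Rightarrow> bool) \<Rightarrow> 'b set \<Rightarrow> 'b \<Rightarrow> bool" where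
  "down_beat R A b \<longleftrightarrow> b \<in> A \<and> (\<exists>b'\<in>A. b' \<noteq> b \<and> R b' b \<and> (\<forall>z\<in>A. R z b \<and> z \<noteq> b \<longrightarrow> R z b'))"

lemma stong_down:
  assumes fin: "finite A" and po: "po_on A R" and gA: "g ` A \<subseteq> A"
    and mono: "\<forall>x\<in>A. \<forall>y\<in>A. R x y \<longrightarrow> R (g x) (g y)"
    and le: "\<forall>y\<in>A. R (g y) y" and nb: "\<not> (\<exists>b. down_beat R A b)"
  shows "\<forall>y\<in>A. g y = y"
proof -
  have "\<forall>y\<in>A. card {z\<in>A. R z y} = n \<longrightarrow> g y = y" for n
  proof (induction n rule: less_induct)
    case (less n)
    show ?case
    proof (intro ballI impI)
      fix y assume y: "y \<in> A" and n: "card {z\<in>A. R z y} = n"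
      have IH: "g z = z" if z: "z \<in> A" "R z y" "z \<noteq> y" for z
      proof -
        have "{w\<in>A. R w z} \<subset> {w\<in>A. R w y}"
        proof
          show "{w\<in>A. R w z} \<subseteq> {w\<in>A. R w y}" using z y po unfolding po_on_def by blast
          have "y \<notin> {w\<in>A. R w z}" using z y po unfolding po_on_def by blast
          moreover have "y \<in> {w\<in>A. R w y}" using y po unfolding po_on_def by blast
          ultimately show "{w\<in>A. R w z} \<noteq> {w\<in>A. R w y}" by blast
        qed
        then have "card {w\<in>A. R w z} < n" using n fin by (metis (no_types, lifting) psubset_card_mono finite_subset subsetI mem_Collect_eq)
        then show ?thesis using less.IH z by blast
      qed
      show "g y = y"
      proof (rule ccontr)
        assume ne: "g y \<noteq> y"
        have gy: "g y \<in> A" using gA y by blast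
        have "\<forall>z\<in>A. R z y \<and> z \<noteq> y \<longrightarrow> R z (g y)"
        proof (intro ballI impI)
          fix z assume "z \<in> A" "R z y \<and> z \<noteq> y"
          then have "g z = z" "R (g z) (g y)" using IH mono y by auto
          then show "R z (g y)" by simp
        qed
        then have "down_beat R A y" unfolding down_beat_def using y gy ne le by blast
        then show False using nb by blast
      qed
    qed
  qed
  then show ?thesis by blast
qed

lemma stong_up:
  assumes fin: "finite A" and po: "po_on A R" and gA: "g ` A \<subseteq> A"
    and mono: "\<forall>x\<in>A. \<forall>y\<in>A. R x y \<longrightarrow> R (g x) (g y)"
    and le: "\<forall>y\<in>A. R y (g y)" and nb: "\<not> (\<exists>b. down_beat (\<lambda>x y. R y x) A b)"
  shows "\<forall>y\<in>A. g y = y"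
proof (rule stong_down[OF fin po_on_dual[OF po] gA _ _ nb])
  show "\<forall>x\<in>A. \<forall>y\<in>A. R y x \<longrightarrow> R (g y) (g x)" using mono by blast
  show "\<forall>y\<in>A. R y (g y)" using le .
qed

lemma rtranclp_sym:
  assumes sym: "\<And>x y. r x y \<Longrightarrow> r y x" and "r\<^sup>*\<^sup>* a b"
  shows "r\<^sup>*\<^sup>* b a"
  using assms(2)
proof (induction rule: rtranclp_induct)
  case base
  then show ?case by simp
next
  case (step y z)
  then show ?case using sym converse_rtranclp_into_rtranclp by metis
qed

lemma fence_CC:
  "finite A \<Longrightarrow> po_on A R \<Longrightarrow> (cmpf R A)\<^sup>*\<^sup>* f g \<Longrightarrow> \<forall>y\<in>A. f y = y \<Longrightarrow> a \<in> A
     \<Longrightarrow> \<forall>y\<in>A. g y = a \<Longrightarrow> CC R A = 0"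
proof (induction "card A" arbitrary: A f g a rule: less_induct)
  case less
  note fin = less.prems(1) and po = less.prems(2) and fence = less.prems(3)
    and f = less.prems(4) and a = less.prems(5) and g = less.prems(6)
  have refl: "\<And>y. y \<in> A \<Longrightarrow> R y y" using po unfolding po_on_def by blast
  show ?case
  proof (cases "\<exists>b. down_beat R A b \<or> down_beat (\<lambda>x y. R y x) A b")
    case True
    then obtain b b' where b: "b \<in> A" "b' \<in> A" "b' \<noteq> b"
      and cases: "(R b' b \<and> (\<forall>z\<in>A. R z b \<and> z \<noteq> b \<longrightarrow> R z b')) \<or>
                  (R b b' \<and> (\<forall>z\<in>A. R b z \<and> z \<noteq> b \<longrightarrow> R b' z))"
      unfolding down_beat_def by blast
    define A' where "A' = A - {b}"
    define r where "r y = (if y = b then b' else y)" for y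
    have rA: "r ` A \<subseteq> A'" using b unfolding r_def A'_def by auto
    have rmono: "R (r x) (r y)" if xy: "x \<in> A" "y \<in> A" "R x y" for x y
    proof -
      consider "x = b" "y = b" | "x = b" "y \<noteq> b" | "x \<noteq> b" "y = b" | "x \<noteq> b" "y \<noteq> b" by blast
      then show ?thesis
      proof cases
        case 1 then show ?thesis using refl b by (simp add: r_def)
      next
        case 2
        have "R b' y" using cases
        proof
          assume "R b' b \<and> (\<forall>z\<in>A. R z b \<and> z \<noteq> b \<longrightarrow> R z b')"
          then show "R b' y" using po b xy 2 unfolding po_on_def by blast
        next
          assume "R b b' \<and> (\<forall>z\<in>A. R b z \<and> z \<noteq> b \<longrightarrow> R b' z)"
          then show "R b' y" using xy 2 by blast
        qed
        then show ?thesis using 2 by (simp add: r_def)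
      next
        case 3
        have "R x b'" using cases
        proof
          assume "R b' b \<and> (\<forall>z\<in>A. R z b \<and> z \<noteq> b \<longrightarrow> R z b')"
          then show "R x b'" using xy 3 by blast
        next
          assume "R b b' \<and> (\<forall>z\<in>A. R b z \<and> z \<noteq> b \<longrightarrow> R b' z)"
          then show "R x b'" using po b xy 3 unfolding po_on_def by blast
        qed
        then show ?thesis using 3 by (simp add: r_def)
      next
        case 4 then show ?thesis using xy by (simp add: r_def)
      qed
    qed
    have A'A: "A' \<subseteq> A" unfolding A'_def by blast
    have cstep: "cmpf R A' (r \<circ> h) (r \<circ> h')" if "cmpf R A h h'" for h h'
    proof -
      have h: "h ` A \<subseteq> A" "h' ` A \<subseteq> A" "\<forall>x\<in>A. \<forall>y\<in>A. R x y \<longrightarrow> R (h x) (h y)"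
        "\<forall>x\<in>A. \<forall>y\<in>A. R x y \<longrightarrow> R (h' x) (h' y)"
        "(\<forall>y\<in>A. R (h y) (h' y)) \<or> (\<forall>y\<in>A. R (h' y) (h y))" using that unfolding cmpf_def by auto
      have rA2: "\<And>y. y \<in> A \<Longrightarrow> r y \<in> A'" using rA by blast
      have hA: "\<And>y. y \<in> A' \<Longrightarrow> h y \<in> A" "\<And>y. y \<in> A' \<Longrightarrow> h' y \<in> A" using h(1,2) A'A by blast+
      have i1: "(r \<circ> h) ` A' \<subseteq> A'" "(r \<circ> h') ` A' \<subseteq> A'" using rA2 hA by auto
      have i2: "\<forall>x\<in>A'. \<forall>y\<in>A'. R x y \<longrightarrow> R ((r \<circ> h) x) ((r \<circ> h) y)"
        using h(1,3) rmono A'A by (simp add: subset_iff image_subset_iff)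
      have i3: "\<forall>x\<in>A'. \<forall>y\<in>A'. R x y \<longrightarrow> R ((r \<circ> h') x) ((r \<circ> h') y)"
        using h(2,4) rmono A'A by (simp add: subset_iff image_subset_iff)
      have i4: "(\<forall>y\<in>A'. R ((r \<circ> h) y) ((r \<circ> h') y)) \<or> (\<forall>y\<in>A'. R ((r \<circ> h') y) ((r \<circ> h) y))"
        using h(5)
      proof
        assume c: "\<forall>y\<in>A. R (h y) (h' y)"
        have "\<forall>y\<in>A'. R ((r \<circ> h) y) ((r \<circ> h') y)"
        proof
          fix y assume y: "y \<in> A'"
          then have "h y \<in> A" "h' y \<in> A" "R (h y) (h' y)" using hA c A'A by blast+
          then show "R ((r \<circ> h) y) ((r \<circ> h') y)" using rmono by simp
        qed
        then show ?thesis by blast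
      next
        assume c: "\<forall>y\<in>A. R (h' y) (h y)"
        have "\<forall>y\<in>A'. R ((r \<circ> h') y) ((r \<circ> h) y)"
        proof
          fix y assume y: "y \<in> A'"
          then have "h y \<in> A" "h' y \<in> A" "R (h' y) (h y)" using hA c A'A by blast+
          then show "R ((r \<circ> h') y) ((r \<circ> h) y)" using rmono by simp
        qed
        then show ?thesis by blast
      qed
      show ?thesis unfolding cmpf_def using i1 i2 i3 i4 by blast
    qed
    have fence': "(cmpf R A')\<^sup>*\<^sup>* (r \<circ> f) (r \<circ> g)"
      using fence
    proof (induction rule: rtranclp_induct)
      case base then show ?case by simp
    next
      case (step y z)
      have "cmpf R A' (r \<circ> y) (r \<circ> z)" using step.hyps(2) by (rule cstep)
      then show ?case using rtranclp.rtrancl_into_rtrancl[OF step.IH] by blast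
    qed
    have IH: "CC R A' = 0"
    proof (rule less.hyps[OF _ _ _ fence'])
      show "card A' < card A" unfolding A'_def using fin b(1) by (rule card_Diff1_less)
      show "finite A'" using fin A'A finite_subset by blast
      show "po_on A' R" using po A'A po_on_subset by blast
      show "\<forall>y\<in>A'. (r \<circ> f) y = y" using f A'A unfolding A'_def r_def by auto
      show "r a \<in> A'" using rA a by blast
      show "\<forall>y\<in>A'. (r \<circ> g) y = r a" using g A'A by auto
    qed
    have "CC R A = CC R A'"
      using cases
    proof
      assume c: "R b' b \<and> (\<forall>z\<in>A. R z b \<and> z \<noteq> b \<longrightarrow> R z b')"
      have "CC R (lw R b A) = 0"
      proof (rule CC_cone)
        show "finite (lw R b A)" using fin by (simp add: lw_def)
        show "b' \<in> lw R b A" using c b by (simp add: lw_def)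
        show "\<forall>z\<in>lw R b A. R z b' \<or> R b' z" using c by (simp add: lw_def)
      qed
      then show ?thesis unfolding A'_def using CC_remove_point[OF fin po b(1)] by blast
    next
      assume c: "R b b' \<and> (\<forall>z\<in>A. R b z \<and> z \<noteq> b \<longrightarrow> R b' z)"
      have "CC R (up R b A) = 0"
      proof (rule CC_cone)
        show "finite (up R b A)" using fin by (simp add: up_def)
        show "b' \<in> up R b A" using c b by (simp add: up_def)
        show "\<forall>z\<in>up R b A. R z b' \<or> R b' z" using c by (simp add: up_def)
      qed
      then show ?thesis unfolding A'_def using CC_remove_point_up[OF fin po b(1)] by blast
    qed
    then show ?thesis using IH by simp
  next
    case False
    have nb1: "\<not> (\<exists>b. down_beat R A b)" and nb2: "\<not> (\<exists>b. down_beat (\<lambda>x y. R y x) A b)"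
      using False by blast+
    have "\<forall>y\<in>A. g y = y"
      using fence f
    proof (induction rule: rtranclp_induct)
      case base then show ?case by simp
    next
      case (step h h')
      have hid: "\<forall>y\<in>A. h y = y" using step by blast
      have c: "h' ` A \<subseteq> A" "\<forall>x\<in>A. \<forall>y\<in>A. R x y \<longrightarrow> R (h' x) (h' y)"
        "(\<forall>y\<in>A. R (h y) (h' y)) \<or> (\<forall>y\<in>A. R (h' y) (h y))"
        using step.hyps(2) unfolding cmpf_def by auto
      from c(3) show ?case
      proof
        assume "\<forall>y\<in>A. R (h y) (h' y)"
        then have "\<forall>y\<in>A. R y (h' y)" using hid by simp
        then show ?thesis using stong_up[OF fin po c(1) c(2) _ nb2] by blast
      next
        assume "\<forall>y\<in>A. R (h' y) (h y)"
        then have "\<forall>y\<in>A. R (h' y) y" using hid by simp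
        then show ?thesis using stong_down[OF fin po c(1) c(2) _ nb1] by blast
      qed
    qed
    then have "\<forall>y\<in>A. y = a" using g by simp
    show ?thesis
    proof (rule CC_cone[OF fin a])
      show "\<forall>z\<in>A. R z a \<or> R a z"
      proof
        fix z assume "z \<in> A"
        then have "z = a" using \<open>\<forall>y\<in>A. y = a\<close> by blast
        then show "R z a \<or> R a z" using refl a by simp
      qed
    qed
  qed
qed


lemma openin_poset:
  "openin (poset_topology X leq) U \<longleftrightarrow> U \<subseteq> X \<and> (\<forall>y\<in>U. \<forall>z\<in>X. leq z y \<longrightarrow> z \<in> U)"
proof -
  have "istopology (\<lambda>U. U \<subseteq> X \<and> (\<forall>y\<in>U. \<forall>z\<in>X. leq z y \<longrightarrow> z \<in> U))"
    unfolding istopology_def by blast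
  then show ?thesis unfolding poset_topology_def by simp
qed

lemma topspace_poset: "topspace (poset_topology X leq) = X"
proof -
  have "openin (poset_topology X leq) X" unfolding openin_poset by blast
  then have "X \<subseteq> topspace (poset_topology X leq)" by (rule openin_subset)
  moreover have "topspace (poset_topology X leq) \<subseteq> X"
    unfolding topspace_def openin_poset by blast
  ultimately show ?thesis by blast
qed

lemma contractible_fence:
  assumes po: "po_on X leq" and fin: "finite X" and AX: "A \<subseteq> X" and ne: "A \<noteq> {}"
    and con: "contractible_space (subtopology (poset_topology X leq) A)"
  shows "\<exists>a\<in>A. (cmpf leq A)\<^sup>*\<^sup>* id (\<lambda>_. a)"
proof -
  define T where "T = subtopology (poset_topology X leq) A"
  have tsT: "topspace T = A" unfolding T_def using AX by (simp add: topspace_poset Int_absorb1)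
  obtain a h where hc: "continuous_map (prod_topology (top_of_set {0..1::real}) T) T h"
    and h0: "\<forall>x. h (0, x) = x" and h1: "\<forall>x. h (1, x) = a"
    using con unfolding contractible_space_def homotopic_with_def T_def by auto
  have finA: "finite A" using fin AX finite_subset by blast
  have refl: "\<And>y. y \<in> A \<Longrightarrow> leq y y" using po AX unfolding po_on_def by blast
  define Od where "Od y = {w\<in>A. leq w y}" for y
  have openOd: "openin T (Od y)" if y: "y \<in> A" for y
  proof -
    have "openin (poset_topology X leq) {w\<in>X. leq w y}"
      unfolding openin_poset using po AX y unfolding po_on_def by blast
    moreover have "Od y = {w\<in>X. leq w y} \<inter> A" unfolding Od_def using AX by blast
    ultimately show ?thesis unfolding T_def openin_subtopology by blast
  qed
  have downc: "y \<in> V" if V: "openin T V" and z: "z \<in> V" and y: "y \<in> A" and yz: "leq y z" for V y z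
  proof -
    obtain U where U: "openin (poset_topology X leq) U" "V = U \<inter> A"
      using V unfolding T_def openin_subtopology by blast
    then show ?thesis using z y yz AX unfolding openin_poset by blast
  qed
  have hs: "continuous_map T T (\<lambda>x. h (s, x))" if s: "s \<in> {0..1}" for s
  proof -
    have "continuous_map T (prod_topology (top_of_set {0..1::real}) T) (\<lambda>x. (s, x))"
      by (rule continuous_map_pairedI) (use s in auto)
    then show ?thesis using continuous_map_compose[OF _ hc] by (simp add: o_def)
  qed
  have ht: "continuous_map (top_of_set {0..1::real}) T (\<lambda>s. h (s, y))" if y: "y \<in> A" for y
  proof -
    have "continuous_map (top_of_set {0..1::real}) (prod_topology (top_of_set {0..1::real}) T) (\<lambda>s. (s, y))"
      by (rule continuous_map_pairedI) (use y tsT in auto)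
    then show ?thesis using continuous_map_compose[OF _ hc] by (simp add: o_def)
  qed
  have hA: "h (s, y) \<in> A" if "s \<in> {0..1}" "y \<in> A" for s y
    using hs[OF that(1)] that(2) tsT continuous_map_image_subset_topspace by fastforce
  have hmono: "leq (h (s, x)) (h (s, y))" if s: "s \<in> {0..1}" and xy: "x \<in> A" "y \<in> A" "leq x y" for s x y
  proof -
    let ?V = "{w \<in> topspace T. h (s, w) \<in> Od (h (s, y))}"
    have "openin T ?V" using openin_continuous_map_preimage[OF hs[OF s] openOd[OF hA[OF s xy(2)]]] .
    moreover have "y \<in> ?V" using tsT xy hA[OF s xy(2)] refl unfolding Od_def by auto
    ultimately have "x \<in> ?V" using downc xy by blast
    then show ?thesis unfolding Od_def by simp
  qed
  have cm: "cmpf leq A (\<lambda>x. h (t, x)) (\<lambda>x. h (s, x))"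
    if t: "t \<in> {0..1}" and s: "s \<in> {0..1}" and le: "\<forall>y\<in>A. leq (h (s, y)) (h (t, y))" for s t
    unfolding cmpf_def using hA[OF t] hA[OF s] hmono[OF t] hmono[OF s] le by auto
  define Rel where "Rel s t \<longleftrightarrow> (cmpf leq A)\<^sup>*\<^sup>* (\<lambda>x. h (s, x)) (\<lambda>x. h (t, x))" for s t
  have symc: "cmpf leq A g f" if "cmpf leq A f g" for f g using that unfolding cmpf_def by blast
  have "Rel 0 1"
  proof (rule connected_equivalence_relation[of "{0..1::real}"])
    show "connected {0..1::real}" by simp
    show "(0::real) \<in> {0..1}" "(1::real) \<in> {0..1}" by auto
    show "Rel y x" if "Rel x y" for x y
      using that rtranclp_sym[of "cmpf leq A", OF symc] unfolding Rel_def by blast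
    show "Rel x z" if "Rel x y" "Rel y z" for x y z using that unfolding Rel_def by simp
    fix t :: real assume t: "t \<in> {0..1}"
    define V where "V = (\<Inter>y\<in>A. {s \<in> topspace (top_of_set {0..1::real}). h (s, y) \<in> Od (h (t, y))})"
    have "openin (top_of_set {0..1::real}) V" unfolding V_def
      using openin_continuous_map_preimage[OF ht openOd[OF hA[OF t]]] finA ne by (intro openin_INT2) auto
    moreover have "t \<in> V" unfolding V_def Od_def using t hA[OF t] refl by auto
    moreover have "\<forall>s\<in>V. Rel t s"
    proof
      fix s assume "s \<in> V"
      then have s: "s \<in> {0..1}" and le: "\<forall>y\<in>A. leq (h (s, y)) (h (t, y))"
        unfolding V_def Od_def using ne by auto
      show "Rel t s" unfolding Rel_def using cm[OF t s le] by blast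
    qed
    ultimately show "\<exists>V. openin (top_of_set {0..1}) V \<and> t \<in> V \<and> (\<forall>s\<in>V. Rel t s)" by blast
  qed
  moreover have "(\<lambda>x. h (0, x)) = id" using h0 by (simp add: fun_eq_iff)
  moreover have "(\<lambda>x. h (1, x)) = (\<lambda>_. a)" using h1 by (simp add: fun_eq_iff)
  moreover obtain y where "y \<in> A" using ne by blast
  then have "a \<in> A" using hA[of 1 y] h1 by simp
  ultimately show ?thesis unfolding Rel_def by auto
qed

lemma finite_poset_po: "finite_poset X leq \<Longrightarrow> finite X \<and> po_on X leq"
  unfolding finite_poset_def po_on_def by blast

lemma det_formula:
  assumes fin: "finite X" and po: "po_on X leq" and f: "bij_betw f {0..<card X} X"
  shows "det (poset_matrix leq (card X) f) = (-1) ^ card X * CC leq X"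
proof -
  have "det (poset_matrix leq (card X) f) = detL {0..<card X} (\<lambda>i j. if leq (f i) (f j) then 0 else 1)"
    by (rule det_poset_matrix)
  also have "\<dots> = (-1) ^ card {0..<card X} * CC (\<lambda>i j. leq (f i) (f j)) {0..<card X}"
    by (rule det_CC) (use po_transport[OF f po] in auto)
  also have "\<dots> = (-1) ^ card X * CC leq X" using CC_transport[OF f] by simp
  finally show ?thesis .
qed

theorem mainTheorem5:
  fixes X :: "'a set" and leq :: "'a \<Rightarrow> 'a \<Rightarrow> bool" and x :: 'a
    and f g :: "nat \<Rightarrow> 'a"
  assumes "finite_poset X leq"
    and "weak_beat_point X leq x"
    and "bij_betw f {0..<card X} X"
    and "bij_betw g {0..<card (X - {x})} (X - {x})"
  shows "det (poset_matrix leq (card X) f) = - det (poset_matrix leq (card (X - {x})) g)"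
proof -
  have fin: "finite X" and po: "po_on X leq" using finite_poset_po[OF assms(1)] by auto
  have xX: "x \<in> X" using assms(2) unfolding weak_beat_point_def down_weak_beat_point_def up_weak_beat_point_def
    by blast
  have CCeq: "CC leq X = CC leq (X - {x})"
    using assms(2) unfolding weak_beat_point_def
  proof
    assume "down_weak_beat_point X leq x"
    then have ne: "hatU X leq x \<noteq> {}" and con: "contractible_space (subtopology (poset_topology X leq) (hatU X leq x))"
      unfolding down_weak_beat_point_def contractible_sub_def by auto
    have eq: "hatU X leq x = lw leq x X" unfolding hatU_def lw_def by auto
    have sub: "lw leq x X \<subseteq> X" unfolding lw_def by auto
    obtain a where a: "a \<in> lw leq x X" and fe: "(cmpf leq (lw leq x X))\<^sup>*\<^sup>* id (\<lambda>_. a)"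
      using contractible_fence[OF po fin sub] ne con unfolding eq by blast
    have "CC leq (lw leq x X) = 0"
      by (rule fence_CC[OF _ _ fe _ a]) (use fin sub po po_on_subset finite_subset in auto)
    then show ?thesis using CC_remove_point[OF fin po xX] by blast
  next
    assume "up_weak_beat_point X leq x"
    then have ne: "hatF X leq x \<noteq> {}" and con: "contractible_space (subtopology (poset_topology X leq) (hatF X leq x))"
      unfolding up_weak_beat_point_def contractible_sub_def by auto
    have eq: "hatF X leq x = up leq x X" unfolding hatF_def up_def by auto
    have sub: "up leq x X \<subseteq> X" unfolding up_def by auto
    obtain a where a: "a \<in> up leq x X" and fe: "(cmpf leq (up leq x X))\<^sup>*\<^sup>* id (\<lambda>_. a)"
      using contractible_fence[OF po fin sub] ne con unfolding eq by blast
    have "CC leq (up leq x X) = 0"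
      by (rule fence_CC[OF _ _ fe _ a]) (use fin sub po po_on_subset finite_subset in auto)
    then show ?thesis using CC_remove_point_up[OF fin po xX] by blast
  qed
  have d1: "det (poset_matrix leq (card X) f) = (-1) ^ card X * CC leq X"
    by (rule det_formula[OF fin po assms(3)])
  have d2: "det (poset_matrix leq (card (X - {x})) g) = (-1) ^ card (X - {x}) * CC leq (X - {x})"
    by (rule det_formula[OF _ _ assms(4)]) (use fin po_on_subset[OF po, of "X - {x}"] in auto)
  obtain k where k: "card (X - {x}) = k" "card X = Suc k"
    using card_Suc_Diff1[OF fin xX] by metis
  show ?thesis using d1 d2 CCeq k by simp
qed

end
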